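(* Let $\sigma\in\{+1,-1\}$ and consider the ODE $$(a^2-1)Q''(a)+\Big(\tfrac83a-\tfrac2a\Big)Q'(a)+\tfrac49Q(a)+\sigma Q(a)^7=0.\qquad(\ast)$$ There exists $\varepsilon>0$ small such that for any $0\le q_0\le\varepsilon$, $(\ast)$ admits a unique smooth solution on $[0,\frac12]$ with $Q(0)=q_0$, $Q'(0)=0$. Moreover, $$Q(1/2)=q_0Q_0(1/2)+O(q_0^7),\qquad Q'(1/2)=q_0Q_0'(1/2)+O(q_0^7),$$ where $Q_0(a):=\frac34\big(\varphi_2(a)-\varphi_1(a)\big)$ with $\varphi_1(a)=a^{-1}(1-a)^{\frac23}$, $\varphi_2(a)=a^{-1}(1+a)^{\frac23}$, and the solution extends as a smooth even function to the interval $[-\frac12,\frac12]$.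
   Context: The function $Q_0$ is analytic and even near $a=0$ with $Q_0(0)=1$; $\varphi_1,\varphi_2$ form a fundamental system of the linear part of $(\ast)$. $O(q_0^7)$ denotes a quantity bounded by an absolute constant times $q_0^7$. *)

theory Defs
  imports "HOL-Analysis.Analysis"
begin

text \<open>C-infinity on a set S (one-sided derivatives at boundary points of S):
  D n is the n-th derivative of f relative to S.\<close>
definition smooth_derivs_on :: "real set \<Rightarrow> (real \<Rightarrow> real) \<Rightarrow> (nat \<Rightarrow> real \<Rightarrow> real) \<Rightarrow> bool" where
  "smooth_derivs_on S f D \<longleftrightarrow>
     D 0 = f \<and> (\<forall>n. \<forall>x\<in>S. (D n has_real_derivative D (Suc n) x) (at x within S))"

definition smooth_on :: "real set \<Rightarrow> (real \<Rightarrow> real) \<Rightarrow> bool" where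
  "smooth_on S f \<longleftrightarrow> (\<exists>D. smooth_derivs_on S f D)"

text \<open>Q is a smooth solution of the ODE on [0,1/2] with Q(0)=q0, Q'(0)=0.
  The ODE is imposed on (0,1/2] (it is singular at a = 0).\<close>
definition ode_sol :: "real \<Rightarrow> real \<Rightarrow> (real \<Rightarrow> real) \<Rightarrow> bool" where
  "ode_sol \<sigma> q0 Q \<longleftrightarrow>
     (\<exists>D. smooth_derivs_on {0..1/2} Q D \<and> Q 0 = q0 \<and> D 1 0 = 0 \<and>
        (\<forall>a\<in>{0<..1/2}. (a\<^sup>2 - 1) * D 2 a + (8/3 * a - 2 / a) * D 1 a
                          + 4/9 * Q a + \<sigma> * Q a ^ 7 = 0))"

definition phi1 :: "real \<Rightarrow> real" where
  "phi1 a = (1 - a) powr (2/3) / a"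

definition phi2 :: "real \<Rightarrow> real" where
  "phi2 a = (1 + a) powr (2/3) / a"

definition Q0 :: "real \<Rightarrow> real" where
  "Q0 a = 3/4 * (phi2 a - phi1 a)"

end

theory Submission
  imports Defs
begin

fun cpow :: "(nat \<Rightarrow> real) \<Rightarrow> nat \<Rightarrow> nat \<Rightarrow> real" where
  "cpow c 0 n = (if n = 0 then 1 else 0)"
| "cpow c (Suc j) n = (\<Sum>i\<le>n. c i * cpow c j (n - i))"

definition rho :: "nat \<Rightarrow> real" where
  "rho n = (real n + 1/3) * (real n + 4/3) / ((real n + 2) * (real n + 3))"

definition nxt :: "real \<Rightarrow> (nat \<Rightarrow> real) \<Rightarrow> nat \<Rightarrow> real" where
  "nxt s c n = rho n * c n + s * cpow c 7 n / ((real n + 2) * (real n + 3))"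

fun Fa :: "real \<Rightarrow> real \<Rightarrow> nat \<Rightarrow> nat \<Rightarrow> real" where
  "Fa s q 0 = (\<lambda>i. if i = 0 then q else 0)"
| "Fa s q (Suc m) = (Fa s q m)(m + 2 := nxt s (Fa s q m) m)"

definition dc :: "real \<Rightarrow> real \<Rightarrow> nat \<Rightarrow> real" where
  "dc s q i = Fa s q i i"

lemma cpow_local: "(\<And>i. i \<le> n \<Longrightarrow> c i = c' i) \<Longrightarrow> cpow c j n = cpow c' j n"
proof (induction j arbitrary: n)
  case 0 then show ?case by simp
next
  case (Suc j)
  show ?case unfolding cpow.simps
    by (rule sum.cong) (use Suc in auto)
qed

lemma nxt_local: "(\<And>i. i \<le> n \<Longrightarrow> c i = c' i) \<Longrightarrow> nxt s c n = nxt s c' n"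
  unfolding nxt_def using cpow_local[of n c c' 7] by simp

lemma Fa_stable: "i \<le> m + 1 \<Longrightarrow> m \<le> m' \<Longrightarrow> Fa s q m' i = Fa s q m i"
proof (induction m' )
  case 0 then show ?case by simp
next
  case (Suc m')
  show ?case
  proof (cases "m = Suc m'")
    case True then show ?thesis by simp
  next
    case False
    then have "m \<le> m'" using Suc by simp
    then have "Fa s q (Suc m') i = Fa s q m' i" using Suc by simp
    then show ?thesis using Suc \<open>m \<le> m'\<close> by simp
  qed
qed

lemma dc_0: "dc s q 0 = q" by (simp add: dc_def)
lemma dc_1: "dc s q (Suc 0) = 0" by (simp add: dc_def)
lemma dc_rec: "dc s q (n + 2) = nxt s (dc s q) n"
proof -
  have "dc s q (n+2) = Fa s q (n+2) (n+2)" by (simp add: dc_def)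
  also have "\<dots> = Fa s q (n+1) (n+2)" by (rule Fa_stable) auto
  also have "\<dots> = nxt s (Fa s q n) n" by simp
  also have "\<dots> = nxt s (dc s q) n"
    by (rule nxt_local) (simp add: dc_def Fa_stable)
  finally show ?thesis .
qed

lemma cpow_odd: "(\<And>i. i \<le> n \<Longrightarrow> odd i \<Longrightarrow> c i = 0) \<Longrightarrow> odd n \<Longrightarrow> cpow c j n = 0"
proof (induction j arbitrary: n)
  case 0 then show ?case using odd_pos by fastforce
next
  case (Suc j)
  have "c i * cpow c j (n - i) = 0" if "i \<le> n" for i
  proof (cases "odd i")
    case True then show ?thesis using Suc.prems that by simp
  next
    case False
    then have "odd (n - i)" using Suc.prems(2) that by simp
    then have "cpow c j (n - i) = 0" using Suc.IH[of "n - i"] Suc.prems that by auto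
    then show ?thesis by simp
  qed
  then show ?case by (simp add: sum.neutral)
qed

lemma dc_odd: "odd n \<Longrightarrow> dc s q n = 0"
proof (induction n rule: less_induct)
  case (less n)
  show ?case
  proof (cases "n < 2")
    case True then have "n = 1" using less.prems by presburger
    then show ?thesis using dc_1 by simp
  next
    case False
    then obtain m where m: "n = m + 2" by (metis add.commute le_add_diff_inverse not_less)
    then have om: "odd m" using less.prems by simp
    have "dc s q m = 0" using less.IH m om by simp
    moreover have "cpow (dc s q) 7 m = 0"
      by (rule cpow_odd) (use less.IH m om in auto)
    ultimately show ?thesis using m dc_rec[of s q m] by (simp add: nxt_def)
  qed
qed

lemma sum2: fixes f :: "nat \<Rightarrow> real" and M :: nat
  shows "(\<Sum>n\<le>M+2. f n) = f 0 + f 1 + (\<Sum>n\<le>M. f (n+2))"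
proof -
  have e: "M + 2 = Suc (Suc M)" by simp
  show ?thesis unfolding e sum.atMost_Suc_shift by (simp add: add.assoc)
qed

lemma cpow_bound:
  assumes r: "r \<ge> 0"
  shows "(\<Sum>n\<le>M. \<bar>cpow c j n\<bar> * r^n) \<le> (\<Sum>n\<le>M. \<bar>c n\<bar> * r^n)^j"
proof (induction j)
  case 0
  have "(\<Sum>n\<le>M. \<bar>cpow c 0 n\<bar> * r^n) = (\<Sum>n\<le>M. if n = 0 then 1 else 0)"
    by (rule sum.cong) auto
  also have "\<dots> = 1" by simp
  finally show ?case by simp
next
  case (Suc j)
  define A where "A = (\<lambda>n. \<bar>c n\<bar> * r^n)"
  define B where "B = (\<lambda>n. \<bar>cpow c j n\<bar> * r^n)"
  have A0: "A n \<ge> 0" for n using r by (simp add: A_def)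
  have B0: "B n \<ge> 0" for n using r by (simp add: B_def)
  have "(\<Sum>n\<le>M. \<bar>cpow c (Suc j) n\<bar> * r^n) \<le> (\<Sum>n\<le>M. \<Sum>i\<le>n. A i * B (n - i))"
  proof (rule sum_mono)
    fix n assume "n \<in> {..M}"
    have "\<bar>cpow c (Suc j) n\<bar> * r^n \<le> (\<Sum>i\<le>n. \<bar>c i * cpow c j (n - i)\<bar>) * r^n"
      using r by (auto intro!: mult_right_mono sum_abs)
    also have "\<dots> = (\<Sum>i\<le>n. A i * B (n - i))"
      unfolding sum_distrib_right A_def B_def
    proof (rule sum.cong)
      fix i assume "i \<in> {..n}"
      then have "r^n = r^i * r^(n-i)" by (simp flip: power_add)
      then show "\<bar>c i * cpow c j (n - i)\<bar> * r ^ n = \<bar>c i\<bar> * r ^ i * (\<bar>cpow c j (n - i)\<bar> * r ^ (n - i))"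
        by (simp add: abs_mult)
    qed simp
    finally show "\<bar>cpow c (Suc j) n\<bar> * r^n \<le> (\<Sum>i\<le>n. A i * B (n - i))" .
  qed
  also have "\<dots> = (\<Sum>(i,k)\<in>{(i,k). i + k \<le> M}. A i * B k)"
    by (rule sum.triangle_reindex_eq[symmetric])
  also have "\<dots> \<le> (\<Sum>(i,k)\<in>{..M} \<times> {..M}. A i * B k)"
    by (rule sum_mono2) (auto intro: mult_nonneg_nonneg A0 B0)
  also have "\<dots> = (\<Sum>i\<le>M. A i) * (\<Sum>k\<le>M. B k)"
    by (simp add: sum_product sum.cartesian_product)
  also have "\<dots> \<le> (\<Sum>i\<le>M. A i) * (\<Sum>i\<le>M. A i)^j"
  proof (rule mult_left_mono)
    show "0 \<le> (\<Sum>i\<le>M. A i)" by (rule sum_nonneg) (simp add: A0)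
    show "(\<Sum>k\<le>M. B k) \<le> (\<Sum>i\<le>M. A i)^j" using Suc.IH by (simp add: A_def B_def)
  qed
  finally show ?case by (simp add: A_def)
qed

lemma rho_nonneg: "rho n \<ge> 0" by (simp add: rho_def)
lemma rho_le1: "rho n \<le> 1"
proof -
  have a: "(real n + 1/3) * (real n + 4/3) = real n * real n + 5/3 * real n + 4/9"
    by (auto simp: field_simps)
  have b: "(real n + 2) * (real n + 3) = real n * real n + 5 * real n + 6"
    by (simp add: algebra_simps)
  have "(real n + 1/3) * (real n + 4/3) \<le> (real n + 2) * (real n + 3)"
    unfolding a b by simp
  then show ?thesis unfolding rho_def by (simp add: divide_le_eq_1)
qed
lemma rho_le': "(real n + 3) * rho n \<le> real n + 1"
proof -
  have n2: "real n + 2 \<noteq> 0" "real n + 3 \<noteq> 0" by linarith+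
  have "(real n + 3) * rho n = ((real n + 1/3) * (real n + 4/3)) * (real n + 3) / ((real n + 2) * (real n + 3))"
    by (simp add: rho_def)
  also have "\<dots> = (real n + 1/3) * (real n + 4/3) / (real n + 2)"
    using n2(2) by (rule mult_divide_mult_cancel_right)
  also have "\<dots> \<le> real n + 1"
  proof -
    have a: "(real n + 1/3) * (real n + 4/3) = real n * real n + 5/3 * real n + 4/9"
      by (auto simp: field_simps)
    have b: "(real n + 1) * (real n + 2) = real n * real n + 3 * real n + 2"
      by (simp add: algebra_simps)
    have "(real n + 1/3) * (real n + 4/3) \<le> (real n + 1) * (real n + 2)"
      unfolding a b by simp
    then show ?thesis by (simp add: divide_le_eq)
  qed
  finally show ?thesis .
qed

definition Rr :: real where "Rr = 2/3"

lemma dc_term: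
  assumes "\<bar>s\<bar> \<le> 1"
  shows "\<bar>dc s q (n+2)\<bar> * Rr^(n+2) \<le> 4/9 * (\<bar>dc s q n\<bar> * Rr^n + \<bar>cpow (dc s q) 7 n\<bar> * Rr^n / 6)"
proof -
  let ?d = "dc s q" and ?p = "cpow (dc s q) 7 n"
  have den: "(real n + 2) * (real n + 3) \<ge> 6" by (simp add: field_simps) 
  have "\<bar>?d (n+2)\<bar> \<le> rho n * \<bar>?d n\<bar> + \<bar>s\<bar> * \<bar>?p\<bar> / ((real n + 2) * (real n + 3))"
    using dc_rec[of s q n] rho_nonneg[of n] by (simp add: nxt_def abs_mult abs_triangle_ineq[THEN order_trans])
  also have "\<dots> \<le> \<bar>?d n\<bar> + \<bar>?p\<bar> / 6"
  proof (rule add_mono)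
    show "rho n * \<bar>?d n\<bar> \<le> \<bar>?d n\<bar>" using rho_le1[of n] rho_nonneg[of n] by (simp add: mult_left_le_one_le)
    have "\<bar>s\<bar> * \<bar>?p\<bar> \<le> \<bar>?p\<bar>" using assms by (simp add: mult_left_le_one_le)
    then show "\<bar>s\<bar> * \<bar>?p\<bar> / ((real n + 2) * (real n + 3)) \<le> \<bar>?p\<bar> / 6"
      using den by (intro frac_le) auto
  qed
  finally have "\<bar>?d (n+2)\<bar> \<le> \<bar>?d n\<bar> + \<bar>?p\<bar> / 6" .
  then have "\<bar>?d (n+2)\<bar> * Rr^(n+2) \<le> (\<bar>?d n\<bar> + \<bar>?p\<bar> / 6) * Rr^(n+2)"
    by (rule mult_right_mono) (simp add: Rr_def)
  also have "\<dots> = 4/9 * (\<bar>?d n\<bar> * Rr^n + \<bar>?p\<bar> * Rr^n / 6)"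
    by (simp add: Rr_def power_add field_simps)
  finally show ?thesis .
qed

definition SS :: "real \<Rightarrow> real \<Rightarrow> nat \<Rightarrow> real" where
  "SS s q N = (\<Sum>n\<le>N. \<bar>dc s q n\<bar> * Rr^n)"

lemma SS_nonneg: "SS s q N \<ge> 0" by (simp add: SS_def Rr_def sum_nonneg)

lemma SS_bound:
  assumes s: "\<bar>s\<bar> \<le> 1" and q: "0 \<le> q" "q \<le> 1/4"
  shows "SS s q N \<le> 2 * q"
proof (induction N rule: less_induct)
  case (less N)
  show ?case
  proof (cases "N < 2")
    case True
    then have "N = 0 \<or> N = 1" by auto
    then show ?thesis using q by (auto simp: SS_def dc_0 dc_1)
  next
    case False
    then obtain M where M: "N = M + 2" by (metis add.commute le_add_diff_inverse not_less)
    have IH: "SS s q M \<le> 2 * q" using less.IH M by simp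
    have "(\<Sum>n\<le>M. \<bar>cpow (dc s q) 7 n\<bar> * Rr^n) \<le> (SS s q M)^7"
      using cpow_bound[where r=Rr and M=M and c="dc s q" and j=7] by (simp add: Rr_def SS_def)
    also have "\<dots> \<le> (2*q)^7" by (rule power_mono[OF IH SS_nonneg])
    finally have T: "(\<Sum>n\<le>M. \<bar>cpow (dc s q) 7 n\<bar> * Rr^n) \<le> (2*q)^7" .
    have "SS s q N = q + 0 + (\<Sum>n\<le>M. \<bar>dc s q (n+2)\<bar> * Rr^(n+2))"
      unfolding SS_def M sum2 using q by (simp add: dc_0 dc_1)
    also have "\<dots> \<le> q + 0 + (\<Sum>n\<le>M. 4/9 * (\<bar>dc s q n\<bar> * Rr^n + \<bar>cpow (dc s q) 7 n\<bar> * Rr^n / 6))"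
      by (intro add_left_mono sum_mono dc_term s)
    also have "\<dots> = q + (4/9 * SS s q M + 2/27 * (\<Sum>n\<le>M. \<bar>cpow (dc s q) 7 n\<bar> * Rr^n))"
      unfolding SS_def sum_distrib_left sum.distrib[symmetric] by (auto intro!: sum.cong simp: algebra_simps)
    also have "\<dots> \<le> q + 4/9 * (2*q) + 2/27 * (2*q)^7"
      using IH T by simp
    also have "\<dots> \<le> 2 * q"
    proof -
      have "q^6 \<le> (1/4)^6" using q by (intro power_mono) auto
      moreover have "(1/4::real)^6 = 1/4096" by (simp add: power_divide)
      ultimately have "q^6 \<le> 1/4096" by linarith
      then have "q * q^6 \<le> q * (1/4096)" using q by (intro mult_left_mono) auto
      moreover have "q^7 = q * q^6" by (subst power_Suc[symmetric]) simp
      ultimately have h1: "q^7 \<le> q / 4096" by linarith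
      have h2: "(2*q)^7 = 128 * q^7" by simp
      show ?thesis using h1 h2 q by linarith
    qed
    finally show ?thesis .
  qed
qed

definition ec :: "nat \<Rightarrow> real" where
  "ec n = 3/4 * ((2/3::real) gchoose (n+1)) * (1 + (-1)^n)"

lemma gstep: "real (Suc k) * (a gchoose Suc k) = (a - real k) * (a gchoose k)" for a :: real
proof -
  have "fact (Suc k) * (a gchoose Suc k) = (\<Prod>i = 0..<Suc k. a - of_nat i)"
    by (rule gbinomial_mult_fact)
  also have "\<dots> = (\<Prod>i = 0..<k. a - of_nat i) * (a - of_nat k)" by simp
  also have "\<dots> = fact k * (a gchoose k) * (a - of_nat k)" by (simp add: gbinomial_mult_fact)
  finally have "fact k * (real (Suc k) * (a gchoose Suc k)) = fact k * ((a - real k) * (a gchoose k))"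
    by (simp add: fact_Suc algebra_simps)
  then show ?thesis by simp
qed

lemma ec_0: "ec 0 = 1" by (simp add: ec_def)
lemma ec_1: "ec (Suc 0) = 0" by (simp add: ec_def)
lemma ec_rec: "ec (n + 2) = rho n * ec n"
proof -
  let ?g = "\<lambda>k. (2/3::real) gchoose k"
  have a: "real (n+3) * ?g (n+3) = (2/3 - real (n+2)) * ?g (n+2)"
    using gstep[of "n+2" "2/3"] by (simp add: numeral_3_eq_3 numeral_2_eq_2)
  have b: "real (n+2) * ?g (n+2) = (2/3 - real (n+1)) * ?g (n+1)"
    using gstep[of "n+1" "2/3"] by (simp add: numeral_2_eq_2)
  have "?g (n+3) = (real n + 1/3) * (real n + 4/3) / ((real n + 2) * (real n + 3)) * ?g (n+1)"
  proof -
    have n0: "real n + 2 \<noteq> 0" "real n + 3 \<noteq> 0" by linarith+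
    have "(real n + 2) * (real n + 3) * ?g (n+3) = (real n + 2) * ((2/3 - real (n+2)) * ?g (n+2))"
      using a by simp
    also have "\<dots> = (2/3 - real (n+2)) * (real (n+2) * ?g (n+2))" by simp
    also have "\<dots> = (2/3 - real (n+2)) * ((2/3 - real (n+1)) * ?g (n+1))" using b by simp
    also have "\<dots> = (real n + 1/3) * (real n + 4/3) * ?g (n+1)"
    proof -
      have e1: "2/3 - real (n+2) = -(real n + 4/3)" "2/3 - real (n+1) = -(real n + 1/3)" by simp_all
      show ?thesis unfolding e1 by (simp only: mult_minus_left mult_minus_right minus_minus) (simp add: ac_simps)
    qed
    finally have h: "(real n + 2) * (real n + 3) * ?g (n+3) = (real n + 1/3) * (real n + 4/3) * ?g (n+1)" .
    have Bnz: "(real n + 2) * (real n + 3) \<noteq> 0" using n0 by simp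
    have "?g (n+3) = ((real n + 2) * (real n + 3) * ?g (n+3)) / ((real n + 2) * (real n + 3))"
      using Bnz by simp
    also have "\<dots> = (real n + 1/3) * (real n + 4/3) / ((real n + 2) * (real n + 3)) * ?g (n+1)"
      unfolding h by simp
    finally show ?thesis .
  qed
  then show ?thesis unfolding ec_def rho_def by (simp add: numeral_3_eq_3 numeral_2_eq_2) (simp add: ac_simps)
qed

definition fc :: "real \<Rightarrow> real \<Rightarrow> nat \<Rightarrow> real" where
  "fc s q n = dc s q n - q * ec n"

lemma fc_0: "fc s q 0 = 0" by (simp add: fc_def dc_0 ec_0)
lemma fc_1: "fc s q (Suc 0) = 0" by (simp add: fc_def dc_1 ec_1)
lemma fc_rec: "fc s q (n+2) = rho n * fc s q n + s * cpow (dc s q) 7 n / ((real n + 2) * (real n + 3))"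
  unfolding fc_def dc_rec ec_rec nxt_def by (simp add: algebra_simps)

lemma fc_term:
  assumes "\<bar>s\<bar> \<le> 1"
  shows "(real (n+2) + 1) * \<bar>fc s q (n+2)\<bar> * Rr^(n+2)
     \<le> 4/9 * ((real n + 1) * \<bar>fc s q n\<bar> * Rr^n + \<bar>cpow (dc s q) 7 n\<bar> * Rr^n / 2)"
proof -
  let ?f = "fc s q" and ?p = "cpow (dc s q) 7 n"
  have n0: "real n + 2 > 0" "real n + 3 > 0" by linarith+
  have "\<bar>?f (n+2)\<bar> \<le> rho n * \<bar>?f n\<bar> + \<bar>s\<bar> * \<bar>?p\<bar> / ((real n + 2) * (real n + 3))"
    using fc_rec[of s q n] rho_nonneg[of n] by (simp add: abs_mult abs_triangle_ineq[THEN order_trans])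
  then have "(real n + 3) * \<bar>?f (n+2)\<bar> \<le> (real n + 3) * (rho n * \<bar>?f n\<bar> + \<bar>s\<bar> * \<bar>?p\<bar> / ((real n + 2) * (real n + 3)))"
    using n0 by (intro mult_left_mono) auto
  also have "\<dots> = ((real n + 3) * rho n) * \<bar>?f n\<bar> + \<bar>s\<bar> * \<bar>?p\<bar> / (real n + 2)"
  proof -
    have "(real n + 3) * (\<bar>s\<bar> * \<bar>?p\<bar> / ((real n + 2) * (real n + 3))) = (\<bar>s\<bar> * \<bar>?p\<bar>) * (real n + 3) / ((real n + 2) * (real n + 3))"
      by simp
    also have "\<dots> = \<bar>s\<bar> * \<bar>?p\<bar> / (real n + 2)"
      by (rule mult_divide_mult_cancel_right) (use n0 in linarith)
    finally have c: "(real n + 3) * (\<bar>s\<bar> * \<bar>?p\<bar> / ((real n + 2) * (real n + 3))) = \<bar>s\<bar> * \<bar>?p\<bar> / (real n + 2)" .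
    show ?thesis by (simp only: distrib_left[of "real n + 3"] c mult.assoc)
  qed
  also have "\<dots> \<le> (real n + 1) * \<bar>?f n\<bar> + \<bar>?p\<bar> / 2"
  proof (rule add_mono)
    show "((real n + 3) * rho n) * \<bar>?f n\<bar> \<le> (real n + 1) * \<bar>?f n\<bar>"
      using rho_le'[of n] by (intro mult_right_mono) auto
    have "\<bar>s\<bar> * \<bar>?p\<bar> \<le> \<bar>?p\<bar>" using assms by (simp add: mult_left_le_one_le)
    then show "\<bar>s\<bar> * \<bar>?p\<bar> / (real n + 2) \<le> \<bar>?p\<bar> / 2"
      by (intro frac_le) auto
  qed
  finally have "(real n + 3) * \<bar>?f (n+2)\<bar> \<le> (real n + 1) * \<bar>?f n\<bar> + \<bar>?p\<bar> / 2" .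
  then have "(real n + 3) * \<bar>?f (n+2)\<bar> * Rr^(n+2) \<le> ((real n + 1) * \<bar>?f n\<bar> + \<bar>?p\<bar> / 2) * Rr^(n+2)"
    by (rule mult_right_mono) (simp add: Rr_def)
  also have "\<dots> = 4/9 * ((real n + 1) * \<bar>?f n\<bar> * Rr^n + \<bar>?p\<bar> * Rr^n / 2)"
    by (simp add: Rr_def power_add field_simps)
  finally show ?thesis by (simp add: add.commute add.left_commute)
qed

definition WW :: "real \<Rightarrow> real \<Rightarrow> nat \<Rightarrow> real" where
  "WW s q N = (\<Sum>n\<le>N. (real n + 1) * \<bar>fc s q n\<bar> * Rr^n)"

lemma WW_bound:
  assumes s: "\<bar>s\<bar> \<le> 1" and q: "0 \<le> q" "q \<le> 1/4"
  shows "WW s q N \<le> 2/5 * (2*q)^7"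
proof (cases "N < 2")
  case True
  then have "N = 0 \<or> N = 1" by auto
  then show ?thesis using q by (auto simp: WW_def fc_0 fc_1)
next
  case False
  then obtain M where M: "N = M + 2" by (metis add.commute le_add_diff_inverse not_less)
  have "(\<Sum>n\<le>M. \<bar>cpow (dc s q) 7 n\<bar> * Rr^n) \<le> (SS s q M)^7"
    using cpow_bound[where r=Rr and M=M and c="dc s q" and j=7] by (simp add: Rr_def SS_def)
  also have "\<dots> \<le> (2*q)^7" by (rule power_mono[OF SS_bound[OF s q] SS_nonneg])
  finally have T: "(\<Sum>n\<le>M. \<bar>cpow (dc s q) 7 n\<bar> * Rr^n) \<le> (2*q)^7" .
  have mono: "WW s q M \<le> WW s q N"
    unfolding WW_def by (rule sum_mono2) (auto simp: M Rr_def)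
  have "WW s q N = 0 + 0 + (\<Sum>n\<le>M. (real (n+2) + 1) * \<bar>fc s q (n+2)\<bar> * Rr^(n+2))"
    unfolding WW_def M sum2 by (simp add: fc_0 fc_1)
  also have "\<dots> \<le> 0 + 0 + (\<Sum>n\<le>M. 4/9 * ((real n + 1) * \<bar>fc s q n\<bar> * Rr^n + \<bar>cpow (dc s q) 7 n\<bar> * Rr^n / 2))"
    by (intro add_left_mono sum_mono fc_term s)
  also have "\<dots> = 4/9 * WW s q M + 2/9 * (\<Sum>n\<le>M. \<bar>cpow (dc s q) 7 n\<bar> * Rr^n)"
    unfolding WW_def sum_distrib_left sum.distrib[symmetric] by (auto intro!: sum.cong simp: algebra_simps)
  finally have "WW s q N \<le> 4/9 * WW s q M + 2/9 * (\<Sum>n\<le>M. \<bar>cpow (dc s q) 7 n\<bar> * Rr^n)" .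
  then show ?thesis using mono T by linarith
qed

definition Qf :: "real \<Rightarrow> real \<Rightarrow> real \<Rightarrow> real" where
  "Qf s q x = (\<Sum>n. dc s q n * x^n)"

definition Dk :: "real \<Rightarrow> real \<Rightarrow> nat \<Rightarrow> real \<Rightarrow> real" where
  "Dk s q m x = (\<Sum>n. (diffs ^^ m) (dc s q) n * x^n)"

lemma Dk_0: "Dk s q 0 = Qf s q" by (simp add: Dk_def Qf_def fun_eq_iff)

lemma bounded_summable:
  fixes f :: "nat \<Rightarrow> real"
  assumes "\<And>n. 0 \<le> f n" "\<And>N. (\<Sum>n\<le>N. f n) \<le> B"
  shows "summable f"
proof (rule summableI_nonneg_bounded[where x=B])
  fix n
  have "(\<Sum>i<n. f i) \<le> (\<Sum>i\<le>n. f i)" by (rule sum_mono2) (auto simp: assms)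
  then show "(\<Sum>i<n. f i) \<le> B" using assms(2)[of n] by linarith
qed (use assms in auto)

lemma partial_le_SS:
  assumes "\<bar>x\<bar> \<le> Rr"
  shows "(\<Sum>n\<le>N. \<bar>dc s q n\<bar> * \<bar>x\<bar>^n) \<le> SS s q N"
  unfolding SS_def
  by (rule sum_mono, rule mult_left_mono, rule power_mono) (use assms in auto)

lemma summ_abs:
  assumes s: "\<bar>s\<bar> \<le> 1" and q: "0 \<le> q" "q \<le> 1/4" and x: "\<bar>x\<bar> \<le> Rr"
  shows "summable (\<lambda>n. \<bar>dc s q n * x^n\<bar>)"
proof (rule bounded_summable[where B="2*q"])
  fix N
  have "(\<Sum>n\<le>N. \<bar>dc s q n * x^n\<bar>) = (\<Sum>n\<le>N. \<bar>dc s q n\<bar> * \<bar>x\<bar>^n)"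
    by (simp add: abs_mult power_abs)
  also have "\<dots> \<le> SS s q N" by (rule partial_le_SS[OF x])
  also have "\<dots> \<le> 2*q" by (rule SS_bound[OF s q])
  finally show "(\<Sum>n\<le>N. \<bar>dc s q n * x^n\<bar>) \<le> 2*q" .
qed simp

lemma summ_d:
  assumes s: "\<bar>s\<bar> \<le> 1" and q: "0 \<le> q" "q \<le> 1/4" and x: "\<bar>x\<bar> \<le> Rr"
  shows "summable (\<lambda>n. dc s q n * x^n)"
  by (rule summable_rabs_cancel[OF summ_abs[OF s q x]])

lemma summ_diffs:
  assumes s: "\<bar>s\<bar> \<le> 1" and q: "0 \<le> q" "q \<le> 1/4"
  shows "\<bar>x\<bar> < Rr \<Longrightarrow> summable (\<lambda>n. (diffs ^^ m) (dc s q) n * x^n)"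
proof (induction m arbitrary: x)
  case 0
  then show ?case using summ_d[OF s q, of x] by simp
next
  case (Suc m)
  have "summable (\<lambda>n. diffs ((diffs ^^ m) (dc s q)) n * x^n)"
    by (rule termdiff_converges[where K=Rr]) (use Suc in auto)
  then show ?case by simp
qed

lemma Dk_deriv:
  assumes s: "\<bar>s\<bar> \<le> 1" and q: "0 \<le> q" "q \<le> 1/4" and x: "\<bar>x\<bar> < Rr"
  shows "(Dk s q m has_real_derivative Dk s q (Suc m) x) (at x)"
proof -
  define K where "K = (\<bar>x\<bar> + Rr) / 2"
  have K1: "\<bar>K\<bar> < Rr" "\<bar>x\<bar> < \<bar>K\<bar>" using x by (auto simp: K_def)
  have "DERIV (\<lambda>x. \<Sum>n. (diffs ^^ m) (dc s q) n * x^n) x :> (\<Sum>n. diffs ((diffs ^^ m) (dc s q)) n * x^n)"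
    by (rule termdiffs_strong[OF summ_diffs[OF s q K1(1)]]) (use K1 in simp)
  then show ?thesis unfolding Dk_def by (simp add: fun_eq_iff)
qed

lemma smooth_Q:
  assumes s: "\<bar>s\<bar> \<le> 1" and q: "0 \<le> q" "q \<le> 1/4" and S: "\<And>x. x \<in> S \<Longrightarrow> \<bar>x\<bar> < Rr"
  shows "smooth_derivs_on S (Qf s q) (Dk s q)"
  unfolding smooth_derivs_on_def
proof (intro conjI allI ballI)
  show "Dk s q 0 = Qf s q" by (rule Dk_0)
  fix n x assume "x \<in> S"
  then show "(Dk s q n has_real_derivative Dk s q (Suc n) x) (at x within S)"
    using Dk_deriv[OF s q S] by (blast intro: has_field_derivative_at_within)
qed

lemma cpow_abs_summ:
  assumes s: "\<bar>s\<bar> \<le> 1" and q: "0 \<le> q" "q \<le> 1/4" and x: "\<bar>x\<bar> \<le> Rr"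
  shows "summable (\<lambda>n. \<bar>cpow (dc s q) j n * x^n\<bar>)"
proof (rule bounded_summable[where B="(2*q)^j"])
  fix N
  have "(\<Sum>n\<le>N. \<bar>cpow (dc s q) j n * x^n\<bar>) = (\<Sum>n\<le>N. \<bar>cpow (dc s q) j n\<bar> * \<bar>x\<bar>^n)"
    by (simp add: abs_mult power_abs)
  also have "\<dots> \<le> (\<Sum>n\<le>N. \<bar>dc s q n\<bar> * \<bar>x\<bar>^n)^j" by (rule cpow_bound) simp
  also have "\<dots> \<le> (2*q)^j"
  proof (rule power_mono)
    show "(\<Sum>n\<le>N. \<bar>dc s q n\<bar> * \<bar>x\<bar>^n) \<le> 2*q"
      using partial_le_SS[OF x, where N=N and s=s and q=q] SS_bound[OF s q, where N=N] by linarith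
  qed (simp add: sum_nonneg)
  finally show "(\<Sum>n\<le>N. \<bar>cpow (dc s q) j n * x^n\<bar>) \<le> (2*q)^j" .
qed simp

lemma cpow_sums:
  assumes s: "\<bar>s\<bar> \<le> 1" and q: "0 \<le> q" "q \<le> 1/4" and x: "\<bar>x\<bar> \<le> Rr"
  shows "(\<lambda>n. cpow (dc s q) j n * x^n) sums (Qf s q x)^j"
proof (induction j)
  case 0
  have "(\<lambda>n. cpow (dc s q) 0 n * x^n) = (\<lambda>n. if n = 0 then 1 else 0)" by (auto simp: fun_eq_iff)
  then show ?case using sums_single[of 0 "\<lambda>_. 1::real"] by simp
next
  case (Suc j)
  have "(\<lambda>k. \<Sum>i\<le>k. (dc s q i * x^i) * (cpow (dc s q) j (k - i) * x^(k - i))) sums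
         ((\<Sum>k. dc s q k * x^k) * (\<Sum>k. cpow (dc s q) j k * x^k))"
    by (rule Cauchy_product_sums) (use summ_abs[OF s q x] cpow_abs_summ[OF s q x] in \<open>simp_all add: real_norm_def\<close>)
  moreover have "(\<Sum>k. cpow (dc s q) j k * x^k) = (Qf s q x)^j" using Suc by (rule sums_unique[symmetric])
  moreover have "(\<lambda>k. \<Sum>i\<le>k. (dc s q i * x^i) * (cpow (dc s q) j (k - i) * x^(k - i))) = (\<lambda>k. cpow (dc s q) (Suc j) k * x^k)"
  proof
    fix k
    have "(\<Sum>i\<le>k. (dc s q i * x^i) * (cpow (dc s q) j (k - i) * x^(k - i))) = (\<Sum>i\<le>k. dc s q i * cpow (dc s q) j (k - i) * x^k)"
    proof (rule sum.cong)
      fix i assume "i \<in> {..k}"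
      then have "x^i * x^(k-i) = x^k" by (simp flip: power_add)
      then show "(dc s q i * x^i) * (cpow (dc s q) j (k - i) * x^(k - i)) = dc s q i * cpow (dc s q) j (k - i) * x^k"
        by (metis (no_types, lifting) mult.assoc mult.left_commute)
    qed simp
    then show "(\<Sum>i\<le>k. (dc s q i * x^i) * (cpow (dc s q) j (k - i) * x^(k - i))) = cpow (dc s q) (Suc j) k * x^k"
      by (simp add: sum_distrib_right)
  qed
  ultimately show ?case by (simp add: Qf_def)
qed

fun xm :: "(nat \<Rightarrow> real) \<Rightarrow> nat \<Rightarrow> real" where
  "xm c 0 = 0"
| "xm c (Suc k) = c k"

lemma xm_sums:
  assumes "(\<lambda>n. c n * x^n) sums S"
  shows "(\<lambda>n. xm c n * x^n) sums (x * S)"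
proof -
  have "(\<lambda>n. x * (c n * x^n)) sums (x * S)" by (rule sums_mult[OF assms])
  then have "(\<lambda>n. xm c (Suc n) * x^(Suc n)) sums (x * S)" by (simp add: algebra_simps)
  then show ?thesis by (subst (asm) sums_Suc_iff) simp
qed

lemma coeff_id:
  fixes s q :: real
  defines "d \<equiv> dc s q"
  defines "c1 \<equiv> diffs d" and "c2 \<equiv> diffs (diffs d)" and "cp \<equiv> cpow d 7"
  shows "xm (xm (xm c2)) n - xm c2 n + 8/3 * xm (xm c1) n + 4/9 * xm d n + s * xm cp n = 2 * c1 n"
proof -
  consider "n = 0" | "n = Suc 0" | "n = Suc (Suc 0)" | m where "n = Suc (Suc (Suc m))"
    by (metis not0_implies_Suc)
  then show ?thesis
  proof cases
    case 1 then show ?thesis by (simp add: c1_def diffs_def d_def dc_1)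
  next
    case 2
    have "d (Suc (Suc 0)) = rho 0 * d 0 + s * cp 0 / 6"
      using dc_rec[of s q 0] by (simp add: nxt_def d_def cp_def numeral_2_eq_2)
    then show ?thesis using 2 by (simp add: c1_def c2_def diffs_def rho_def numeral_2_eq_2 field_simps)
  next
    case 3
    have "d (Suc (Suc (Suc 0))) = rho (Suc 0) * d (Suc 0) + s * cp (Suc 0) / 12"
      using dc_rec[of s q 1] by (simp add: nxt_def d_def cp_def numeral_3_eq_3 numeral_2_eq_2)
    then show ?thesis using 3 by (simp add: c1_def c2_def diffs_def d_def dc_1 numeral_2_eq_2 numeral_3_eq_3 field_simps)
  next
    case 4
    define r where "r = real m"
    define D where "D = d (Suc (Suc m))"
    define E where "E = d (Suc (Suc (Suc (Suc m))))"
    define P where "P = cp (Suc (Suc m))"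
    define B where "B = (4 + r) * (5 + r)"
    have Bnz: "B \<noteq> 0" by (simp add: B_def r_def add_pos_pos)
    have e: "E = rho (Suc (Suc m)) * D + s * P / B"
      using dc_rec[of s q "m+2"] by (simp add: nxt_def d_def cp_def numeral_2_eq_2 add.assoc D_def E_def P_def B_def r_def)
    have rr: "rho (Suc (Suc m)) = (r + 7/3) * (r + 10/3) / B"
    proof -
      have a1: "real (Suc (Suc m)) + 1/3 = r + 7/3" "real (Suc (Suc m)) + 4/3 = r + 10/3" by (simp_all add: r_def)
      have a2: "(real (Suc (Suc m)) + 2) * (real (Suc (Suc m)) + 3) = B" by (simp add: B_def r_def algebra_simps)
      show ?thesis unfolding rho_def a1 a2 ..
    qed
    have key: "B * E = (r + 7/3) * (r + 10/3) * D + s * P"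
      using Bnz unfolding e rr by (simp add: distrib_left)
    have goal': "(r+1)*(r+2)*D - (r+3)*(r+4)*E + 8/3*((r+2)*D) + 4/9*D + s*P = 2*((r+4)*E)"
      using key unfolding B_def by algebra
    have c2m: "c2 m = (r+1)*(r+2)*D" by (simp add: c2_def diffs_def D_def r_def algebra_simps)
    have c2mm: "c2 (Suc (Suc m)) = (r+3)*(r+4)*E" by (simp add: c2_def diffs_def E_def r_def algebra_simps)
    have c1m: "c1 (Suc m) = (r+2)*D" by (simp add: c1_def diffs_def D_def r_def algebra_simps)
    have c1mmm: "c1 (Suc (Suc (Suc m))) = (r+4)*E" by (simp add: c1_def diffs_def E_def r_def algebra_simps)
    show ?thesis using 4 goal' by (simp add: c2m c2mm c1m c1mmm D_def P_def)
  qed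
qed

lemma Qf_0: "Qf s q 0 = q" by (simp add: Qf_def powser_zero dc_0)
lemma Dk1_0: "Dk s q 1 0 = 0"
  unfolding Dk_def using powser_zero[of "(diffs ^^ 1) (dc s q)"] by (simp add: diffs_def dc_1)

lemma Qf_even: "Qf s q (-x) = Qf s q x"
  unfolding Qf_def
proof (rule arg_cong[where f=suminf], rule ext)
  fix n
  show "dc s q n * (-x)^n = dc s q n * x^n"
    by (cases "even n") (simp_all add: dc_odd)
qed

lemma ode_at:
  assumes s: "\<bar>s\<bar> \<le> 1" and q: "0 \<le> q" "q \<le> 1/4" and a: "a \<noteq> 0" "\<bar>a\<bar> < Rr"
  shows "(a^2 - 1) * Dk s q 2 a + (8/3*a - 2/a) * Dk s q 1 a + 4/9 * Qf s q a + s * Qf s q a ^ 7 = 0"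
proof -
  let ?d = "dc s q"
  define D1 where "D1 = Dk s q 1 a"
  define D2 where "D2 = Dk s q 2 a"
  define Q where "Q = Qf s q a"
  define c1 where "c1 = diffs ?d"
  define c2 where "c2 = diffs (diffs ?d)"
  define cp where "cp = cpow ?d 7"
  have aR: "\<bar>a\<bar> \<le> Rr" using a by simp
  have S0: "(\<lambda>n. ?d n * a^n) sums Q" using summ_d[OF s q aR] by (simp add: Q_def Qf_def summable_sums)
  have "(\<lambda>n. (diffs ^^ 1) ?d n * a^n) sums D1"
    using summ_diffs[OF s q a(2), of 1] unfolding D1_def Dk_def by (rule summable_sums)
  then have S1: "(\<lambda>n. c1 n * a^n) sums D1" by (simp add: c1_def)
  have "(\<lambda>n. (diffs ^^ 2) ?d n * a^n) sums D2"
    using summ_diffs[OF s q a(2), of 2] unfolding D2_def Dk_def by (rule summable_sums)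
  then have S2: "(\<lambda>n. c2 n * a^n) sums D2" by (simp add: c2_def numeral_2_eq_2)
  have S7: "(\<lambda>n. cp n * a^n) sums Q^7" using cpow_sums[OF s q aR, of 7] by (simp add: cp_def Q_def)
  have X: "(\<lambda>n. xm (xm (xm c2)) n * a^n - xm c2 n * a^n + 8/3 * (xm (xm c1) n * a^n)
              + 4/9 * (xm ?d n * a^n) + s * (xm cp n * a^n))
     sums (a*(a*(a*D2)) - a*D2 + 8/3*(a*(a*D1)) + 4/9*(a*Q) + s*(a*Q^7))"
    by (intro sums_add sums_diff sums_mult xm_sums S0 S1 S2 S7)
  have F: "(\<lambda>n. xm (xm (xm c2)) n * a^n - xm c2 n * a^n + 8/3 * (xm (xm c1) n * a^n)
              + 4/9 * (xm ?d n * a^n) + s * (xm cp n * a^n)) = (\<lambda>n. 2 * (c1 n * a^n))"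
  proof (rule ext)
    fix n
    have h: "xm (xm (xm c2)) n - xm c2 n + 8/3 * xm (xm c1) n + 4/9 * xm ?d n + s * xm cp n = 2 * c1 n"
      unfolding c1_def c2_def cp_def by (rule coeff_id)
    show "xm (xm (xm c2)) n * a^n - xm c2 n * a^n + 8/3 * (xm (xm c1) n * a^n)
              + 4/9 * (xm ?d n * a^n) + s * (xm cp n * a^n) = 2 * (c1 n * a^n)"
    proof -
      have "xm (xm (xm c2)) n * a^n - xm c2 n * a^n + 8/3 * (xm (xm c1) n * a^n)
              + 4/9 * (xm ?d n * a^n) + s * (xm cp n * a^n)
          = (xm (xm (xm c2)) n - xm c2 n + 8/3 * xm (xm c1) n + 4/9 * xm ?d n + s * xm cp n) * a^n"
        by (simp add: algebra_simps)
      also have "\<dots> = 2 * (c1 n * a^n)" unfolding h by simp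
      finally show ?thesis .
    qed
  qed
  have Y: "(\<lambda>n. 2 * (c1 n * a^n)) sums (2 * D1)" by (rule sums_mult[OF S1])
  have V: "a*(a*(a*D2)) - a*D2 + 8/3*(a*(a*D1)) + 4/9*(a*Q) + s*(a*Q^7) = 2 * D1"
    using X Y unfolding F by (rule sums_unique2)
  have "a * ((a^2 - 1) * D2 + (8/3*a - 2/a) * D1 + 4/9 * Q + s * Q ^ 7)
       = (a*(a*(a*D2)) - a*D2 + 8/3*(a*(a*D1)) + 4/9*(a*Q) + s*(a*Q^7)) - 2 * D1"
    using a(1) by (simp add: field_simps power2_eq_square)
  also have "\<dots> = 0" using V by simp
  finally show ?thesis using a(1) by (simp add: D1_def D2_def Q_def)
qed

lemma Q0_sums:
  assumes a: "0 < \<bar>a\<bar>" "\<bar>a\<bar> < 1"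
  shows "(\<lambda>n. ec n * a^n) sums Q0 a"
proof -
  let ?g = "\<lambda>n. (2/3::real) gchoose n"
  have P: "(\<lambda>n. ?g n * a^n) sums (1 + a) powr (2/3)" by (rule gen_binomial_real) (use a in simp)
  have M: "(\<lambda>n. ?g n * (-a)^n) sums (1 + -a) powr (2/3)" by (rule gen_binomial_real) (use a in simp)
  define f where "f = (\<lambda>n. ?g n * a^n - ?g n * (-a)^n)"
  have "f sums ((1 + a) powr (2/3) - (1 + -a) powr (2/3))" unfolding f_def by (rule sums_diff[OF P M])
  then have "(\<lambda>n. f (Suc n)) sums ((1 + a) powr (2/3) - (1 + -a) powr (2/3))"
    by (subst sums_Suc_iff) (simp add: f_def)
  then have "(\<lambda>n. 3 / (4*a) * f (Suc n)) sums (3 / (4*a) * ((1 + a) powr (2/3) - (1 + -a) powr (2/3)))"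
    by (rule sums_mult)
  moreover have "(\<lambda>n. 3 / (4*a) * f (Suc n)) = (\<lambda>n. ec n * a^n)"
  proof
    fix n
    have "f (Suc n) = ?g (Suc n) * a^(Suc n) * (1 + (-1)^n)"
      unfolding f_def by (subst power_minus) (simp add: algebra_simps)
    then show "3 / (4*a) * f (Suc n) = ec n * a^n"
      using a by (simp add: ec_def field_simps)
  qed
  moreover have "3 / (4*a) * ((1 + a) powr (2/3) - (1 + -a) powr (2/3)) = Q0 a"
    unfolding Q0_def phi1_def phi2_def using a by (simp add: field_simps)
  ultimately show ?thesis by simp
qed

definition Gf :: "real \<Rightarrow> real" where "Gf x = (\<Sum>n. ec n * x^n)"

lemma deriv_Q0: "deriv Q0 (1/2) = (\<Sum>n. diffs ec n * (1/2)^n)"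
proof -
  have sm: "summable (\<lambda>n. ec n * (3/4)^n)" using Q0_sums[of "3/4"] by (simp add: sums_summable)
  have "DERIV (\<lambda>x. \<Sum>n. ec n * x^n) (1/2) :> (\<Sum>n. diffs ec n * (1/2)^n)"
    by (rule termdiffs_strong[OF sm]) simp
  then have "(Q0 has_field_derivative (\<Sum>n. diffs ec n * (1/2)^n)) (at (1/2))"
  proof (rule has_field_derivative_transform_within_open[where S="{0<..<1}"])
    fix x :: real assume "x \<in> {0<..<1}"
    then show "(\<Sum>n. ec n * x^n) = Q0 x" using Q0_sums[of x] by (simp add: sums_iff)
  qed auto
  then show ?thesis by (rule DERIV_imp_deriv)
qed

lemma sums_abs_le:
  fixes f :: "nat \<Rightarrow> real"
  assumes "f sums S" "\<And>N. (\<Sum>n<N. \<bar>f n\<bar>) \<le> B"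
  shows "\<bar>S\<bar> \<le> B"
proof -
  have "(\<lambda>N. \<Sum>n<N. f n) \<longlonglongrightarrow> S" using assms(1) by (simp add: sums_def)
  then have "(\<lambda>N. \<bar>\<Sum>n<N. f n\<bar>) \<longlonglongrightarrow> \<bar>S\<bar>" by (rule tendsto_rabs)
  moreover have "\<bar>\<Sum>n<N. f n\<bar> \<le> B" for N using sum_abs[of f "{..<N}"] assms(2)[of N] by linarith
  ultimately show ?thesis by (intro LIMSEQ_le_const2) auto
qed

lemma pow_half_le: "(1/2::real)^n \<le> (2/3)^n" by (rule power_mono) auto

lemma est1:
  assumes s: "\<bar>s\<bar> \<le> 1" and q: "0 \<le> q" "q \<le> 1/4"
  shows "\<bar>Qf s q (1/2) - q * Q0 (1/2)\<bar> \<le> 128 * q^7"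
proof -
  have hR: "\<bar>1/2::real\<bar> \<le> Rr" by (simp add: Rr_def)
  have A: "(\<lambda>n. dc s q n * (1/2)^n) sums Qf s q (1/2)"
    using summ_d[OF s q hR] by (simp add: Qf_def summable_sums)
  have B: "(\<lambda>n. ec n * (1/2)^n) sums Q0 (1/2)" by (rule Q0_sums) auto
  have "(\<lambda>n. dc s q n * (1/2)^n - q * (ec n * (1/2)^n)) sums (Qf s q (1/2) - q * Q0 (1/2))"
    by (intro sums_diff sums_mult A B)
  then have C: "(\<lambda>n. fc s q n * (1/2)^n) sums (Qf s q (1/2) - q * Q0 (1/2))"
    by (simp add: fc_def algebra_simps)
  show ?thesis
  proof (rule sums_abs_le[OF C])
    fix N
    have "(\<Sum>n<N. \<bar>fc s q n * (1/2)^n\<bar>) \<le> (\<Sum>n\<le>N. \<bar>fc s q n * (1/2)^n\<bar>)"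
      by (rule sum_mono2) auto
    also have "\<dots> \<le> WW s q N"
      unfolding WW_def
    proof (rule sum_mono)
      fix n
      have "\<bar>fc s q n * (1/2)^n\<bar> = \<bar>fc s q n\<bar> * (1/2)^n" by (simp add: abs_mult)
      also have "\<dots> \<le> \<bar>fc s q n\<bar> * (2/3)^n" by (rule mult_left_mono[OF pow_half_le]) simp
      also have "\<dots> \<le> (real n + 1) * \<bar>fc s q n\<bar> * Rr^n"
        by (simp add: Rr_def mult_le_cancel_right1 mult_right_mono)
      finally show "\<bar>fc s q n * (1/2)^n\<bar> \<le> (real n + 1) * \<bar>fc s q n\<bar> * Rr^n" .
    qed
    also have "\<dots> \<le> 2/5 * (2*q)^7" by (rule WW_bound[OF s q])
    also have "\<dots> \<le> 128 * q^7" using q by simp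
    finally show "(\<Sum>n<N. \<bar>fc s q n * (1/2)^n\<bar>) \<le> 128 * q^7" .
  qed
qed

lemma est2:
  assumes s: "\<bar>s\<bar> \<le> 1" and q: "0 \<le> q" "q \<le> 1/4"
  shows "\<bar>Dk s q 1 (1/2) - q * deriv Q0 (1/2)\<bar> \<le> 128 * q^7"
proof -
  have hR: "\<bar>1/2::real\<bar> < Rr" by (simp add: Rr_def)
  have A: "(\<lambda>n. diffs (dc s q) n * (1/2)^n) sums Dk s q 1 (1/2)"
    using summ_diffs[OF s q hR, of 1] by (simp add: Dk_def summable_sums)
  have sm: "summable (\<lambda>n. ec n * (3/4)^n)" using Q0_sums[of "3/4"] by (simp add: sums_summable)
  have "summable (\<lambda>n. diffs ec n * (1/2)^n)"
    by (rule termdiff_converges[where K="3/4"]) (use powser_inside[OF sm] in auto)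
  then have B: "(\<lambda>n. diffs ec n * (1/2)^n) sums deriv Q0 (1/2)"
    unfolding deriv_Q0 by (rule summable_sums)
  have "(\<lambda>n. diffs (dc s q) n * (1/2)^n - q * (diffs ec n * (1/2)^n)) sums (Dk s q 1 (1/2) - q * deriv Q0 (1/2))"
    by (intro sums_diff sums_mult A B)
  then have C: "(\<lambda>n. (real n + 1) * fc s q (Suc n) * (1/2)^n) sums (Dk s q 1 (1/2) - q * deriv Q0 (1/2))"
    by (simp add: fc_def diffs_def algebra_simps)
  show ?thesis
  proof (rule sums_abs_le[OF C])
    fix N
    define g where "g = (\<lambda>n. (real n + 1) * \<bar>fc s q n\<bar> * Rr^n)"
    have "(\<Sum>n<N. \<bar>(real n + 1) * fc s q (Suc n) * (1/2)^n\<bar>) \<le> (\<Sum>n<N. 3/2 * g (Suc n))"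
    proof (rule sum_mono)
      fix n
      have "\<bar>(real n + 1) * fc s q (Suc n) * (1/2)^n\<bar> = (real n + 1) * \<bar>fc s q (Suc n)\<bar> * (1/2)^n"
        by (simp add: abs_mult)
      also have "\<dots> \<le> (real n + 1) * \<bar>fc s q (Suc n)\<bar> * (2/3)^n"
        by (rule mult_left_mono[OF pow_half_le]) simp
      also have "\<dots> \<le> (real n + 2) * \<bar>fc s q (Suc n)\<bar> * (2/3)^n"
        by (intro mult_right_mono) auto
      also have "\<dots> = 3/2 * g (Suc n)" by (simp add: g_def Rr_def)
      finally show "\<bar>(real n + 1) * fc s q (Suc n) * (1/2)^n\<bar> \<le> 3/2 * g (Suc n)" .
    qed
    also have "\<dots> = 3/2 * (\<Sum>n<N. g (Suc n))" by (simp add: sum_distrib_left)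
    also have "\<dots> \<le> 3/2 * WW s q N"
    proof -
      have "WW s q N = g 0 + (\<Sum>n<N. g (Suc n))" unfolding WW_def g_def by (rule sum.atMost_shift)
      moreover have "g 0 \<ge> 0" by (simp add: g_def)
      ultimately show ?thesis by simp
    qed
    also have "\<dots> \<le> 3/2 * (2/5 * (2*q)^7)" using WW_bound[OF s q, of N] by simp
    also have "\<dots> \<le> 128 * q^7" using q by simp
    finally show "(\<Sum>n<N. \<bar>(real n + 1) * fc s q (Suc n) * (1/2)^n\<bar>) \<le> 128 * q^7" .
  qed
qed

lemma pow7_lip:
  fixes u v B :: real
  assumes "\<bar>u\<bar> \<le> B" "\<bar>v\<bar> \<le> B"
  shows "\<bar>u^7 - v^7\<bar> \<le> 7 * B^6 * \<bar>u - v\<bar>"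
proof -
  have e: "u^7 - v^7 = (u - v) * (\<Sum>p<7. u^p * v^(6 - p))"
    using diff_power_eq_sum[of u 6 v] by (simp add: numeral_eq_Suc)
  have "\<bar>\<Sum>p<7. u^p * v^(6 - p)\<bar> \<le> (\<Sum>p<(7::nat). B^6)"
  proof -
    have "\<bar>\<Sum>p<7. u^p * v^(6 - p)\<bar> \<le> (\<Sum>p<7. \<bar>u^p * v^(6 - p)\<bar>)" by (rule sum_abs)
    also have "\<dots> \<le> (\<Sum>p<(7::nat). B^6)"
    proof (rule sum_mono)
      fix p :: nat assume p: "p \<in> {..<7}"
      have "\<bar>u^p * v^(6 - p)\<bar> = \<bar>u\<bar>^p * \<bar>v\<bar>^(6 - p)" by (simp add: abs_mult power_abs)
      also have "\<dots> \<le> B^p * B^(6 - p)"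
        by (intro mult_mono power_mono) (use assms in auto)
      also have "\<dots> = B^6" using p by (simp flip: power_add)
      finally show "\<bar>u^p * v^(6 - p)\<bar> \<le> B^6" .
    qed
    finally show ?thesis .
  qed
  then have "\<bar>\<Sum>p<7. u^p * v^(6 - p)\<bar> \<le> 7 * B^6" by simp
  then show ?thesis unfolding e abs_mult
    by (metis abs_ge_zero mult.commute mult_right_mono)
qed

lemma mu_deriv:
  fixes x :: real
  assumes "x^2 \<noteq> 1"
  shows "((\<lambda>x. x^2 / (1 - x^2)) has_real_derivative (2 * x / (1 - x^2)^2)) (at x within S)"
proof -
  have nz: "1 - x^2 \<noteq> 0" using assms by simp
  show ?thesis
    by (rule derivative_eq_intros refl | use nz in \<open>simp add: field_simps power2_eq_square\<close>)+
qed

lemma G1lem: "(u::real) \<noteq> 0 \<Longrightarrow> (2*z/u^2*a + z^2/u*b) * u^2 = 2*z*a + z^2*u*b"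
  by (simp add: field_simps power2_eq_square)

lemma uniq:
  fixes \<sigma> q0 :: real
  assumes R: "ode_sol \<sigma> q0 R" and Q: "ode_sol \<sigma> q0 Q"
  shows "\<forall>a\<in>{0..1/2}. R a = Q a"
proof -
  define I where "I = {0..1/2::real}"
  obtain DR where DR: "smooth_derivs_on I R DR" "R 0 = q0" "DR 1 0 = 0"
    "\<forall>a\<in>{0<..1/2}. (a\<^sup>2 - 1) * DR 2 a + (8/3 * a - 2 / a) * DR 1 a + 4/9 * R a + \<sigma> * R a ^ 7 = 0"
    using R unfolding ode_sol_def I_def by blast
  obtain DQ where DQ: "smooth_derivs_on I Q DQ" "Q 0 = q0" "DQ 1 0 = 0"
    "\<forall>a\<in>{0<..1/2}. (a\<^sup>2 - 1) * DQ 2 a + (8/3 * a - 2 / a) * DQ 1 a + 4/9 * Q a + \<sigma> * Q a ^ 7 = 0"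
    using Q unfolding ode_sol_def I_def by blast
  have dR: "(R has_real_derivative DR 1 x) (at x within I)" "(DR 1 has_real_derivative DR 2 x) (at x within I)"
    if "x \<in> I" for x
    using DR(1) that unfolding smooth_derivs_on_def by (metis One_nat_def Suc_1)+
  have dQ: "(Q has_real_derivative DQ 1 x) (at x within I)" "(DQ 1 has_real_derivative DQ 2 x) (at x within I)"
    if "x \<in> I" for x
    using DQ(1) that unfolding smooth_derivs_on_def by (metis One_nat_def Suc_1)+
  define W where "W = (\<lambda>x. R x - Q x)"
  define W1 where "W1 = (\<lambda>x. DR 1 x - DQ 1 x)"
  define W2 where "W2 = (\<lambda>x. DR 2 x - DQ 2 x)"
  have dW: "(W has_real_derivative W1 x) (at x within I)" if "x \<in> I" for x
    unfolding W_def W1_def by (intro DERIV_diff dR dQ that)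
  have dW1: "(W1 has_real_derivative W2 x) (at x within I)" if "x \<in> I" for x
    unfolding W2_def W1_def by (intro DERIV_diff dR dQ that)
  have contW: "continuous_on I W" by (rule DERIV_continuous_on[OF dW])
  have contW1: "continuous_on I W1" by (rule DERIV_continuous_on[OF dW1])
  have contR: "continuous_on I R" by (rule DERIV_continuous_on[OF dR(1)])
  have contQ: "continuous_on I Q" by (rule DERIV_continuous_on[OF dQ(1)])
  have W0: "W 0 = 0" "W1 0 = 0" using DR DQ by (simp_all add: W_def W1_def)
  obtain BR where BR: "BR > 0" "\<forall>y\<in>R ` I. norm y \<le> BR"
    using compact_imp_bounded[OF compact_continuous_image[OF contR]] unfolding I_def bounded_pos by auto
  obtain BQ where BQ: "BQ > 0" "\<forall>y\<in>Q ` I. norm y \<le> BQ"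
    using compact_imp_bounded[OF compact_continuous_image[OF contQ]] unfolding I_def bounded_pos by auto
  define B where "B = max BR BQ"
  have Bb: "\<bar>R x\<bar> \<le> B" "\<bar>Q x\<bar> \<le> B" if "x \<in> I" for x
    using BR BQ that unfolding B_def by force+
  define L where "L = 7 * B^6"
  have L0: "L \<ge> 0" by (simp add: L_def B_def)
  have lip: "\<bar>R x ^ 7 - Q x ^ 7\<bar> \<le> L * \<bar>W x\<bar>" if "x \<in> I" for x
    unfolding L_def W_def by (rule pow7_lip[OF Bb[OF that]])
  have odeW: "(x\<^sup>2 - 1) * W2 x + (8/3 * x - 2 / x) * W1 x + 4/9 * W x + \<sigma> * (R x ^ 7 - Q x ^ 7) = 0"
    if "x \<in> {0<..1/2}" for x
  proof -
    have "(x\<^sup>2 - 1) * W2 x + (8/3 * x - 2 / x) * W1 x + 4/9 * W x + \<sigma> * (R x ^ 7 - Q x ^ 7)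
      = ((x\<^sup>2 - 1) * DR 2 x + (8/3 * x - 2 / x) * DR 1 x + 4/9 * R x + \<sigma> * R x ^ 7)
      - ((x\<^sup>2 - 1) * DQ 2 x + (8/3 * x - 2 / x) * DQ 1 x + 4/9 * Q x + \<sigma> * Q x ^ 7)"
      unfolding W_def W1_def W2_def right_diff_distrib by linarith
    then show ?thesis using DR(4) DQ(4) that by simp
  qed
  define K where "K = 4/3 * (4/3 + 4/9 + \<bar>\<sigma>\<bar> * L)"
  have K0: "K \<ge> 0" using L0 by (simp add: K_def)
  define h where "h = 1 / (2 * (1 + K))"
  have h0: "h > 0" using K0 by (simp add: h_def)
  have hK: "(1 + K) * h = 1/2" using K0 by (simp add: h_def)
  define mu where "mu = (\<lambda>x::real. x^2 / (1 - x^2))"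
  have step: "\<forall>x\<in>{t0..min (t0 + h) (1/2)}. W x = 0 \<and> W1 x = 0"
    if t0: "0 \<le> t0" "t0 \<le> 1/2" "W t0 = 0" "W1 t0 = 0" for t0
  proof -
    define t1 where "t1 = min (t0 + h) (1/2)"
    define J where "J = {t0..t1}"
    have t12a: "t1 \<le> 1/2" unfolding t1_def by (rule min.cobounded2)
    have t12b: "t0 \<le> t1" unfolding t1_def using t0 h0 by simp
    note t12 = t12a t12b
    have JI: "J \<subseteq> I" using t0 t12 by (auto simp: J_def I_def)
    have Jne: "J \<noteq> {}" using t12 by (auto simp: J_def)
    define v where "v = (\<lambda>x. \<bar>W x\<bar> + \<bar>W1 x\<bar>)"
    have contv: "continuous_on J v" unfolding v_def
      by (intro continuous_intros continuous_on_subset[OF contW JI] continuous_on_subset[OF contW1 JI])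
    obtain xm where xm: "xm \<in> J" "\<forall>y\<in>J. v y \<le> v xm"
      using continuous_attains_sup[OF _ Jne contv] unfolding J_def by auto
    define M where "M = v xm"
    have vy: "v y \<le> M" if "y \<in> J" for y using xm(2) that unfolding M_def by simp
    have bW: "\<bar>W y\<bar> \<le> M" "\<bar>W1 y\<bar> \<le> M" if "y \<in> J" for y
      using vy[OF that] abs_ge_zero[of "W y"] abs_ge_zero[of "W1 y"] unfolding v_def by linarith+
    have M0: "M \<ge> 0" unfolding M_def v_def by simp
    have est: "v x \<le> M / 2" if x: "x \<in> J" for x
    proof -
      have xI: "x \<in> I" using x JI by auto
      have x0: "t0 \<le> x" "x \<le> t1" using x by (auto simp: J_def)
      have xh: "x - t0 \<le> h" using x0 by (simp add: t1_def)
      have sub: "{t0..x} \<subseteq> J" using x0 by (auto simp: J_def)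
      have e1: "\<bar>W x\<bar> \<le> h * M"
      proof -
        have "norm (W x - W t0) \<le> M * norm (x - t0)"
        proof (rule field_differentiable_bound[where S="{t0..x}" and f'=W1])
          fix z assume z: "z \<in> {t0..x}"
          show "(W has_field_derivative W1 z) (at z within {t0..x})"
          proof -
            have zI: "z \<in> I" using z sub JI by auto
            show ?thesis by (rule DERIV_subset[OF dW[OF zI]]) (use sub JI in auto)
          qed
          show "norm (W1 z) \<le> M" using bW(2)[of z] z sub by auto
        qed (use x0 in auto)
        then have "\<bar>W x\<bar> \<le> M * (x - t0)" using t0 x0 by simp
        also have "\<dots> \<le> M * h" using M0 xh by (intro mult_left_mono) auto
        finally show ?thesis by (simp add: mult.commute)
      qed
      have e2: "\<bar>W1 x\<bar> \<le> K * M * h"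
      proof (cases "x = 0")
        case True then show ?thesis using W0 K0 M0 h0 by simp
      next
        case False
        then have xp: "x > 0" using x0 t0 by simp
        have x12: "x \<le> 1/2" using xI by (simp add: I_def)
        have mux: "mu x > 0"
        proof -
          have "x^2 \<le> (1/2)^2" using xp x12 by (intro power_mono) auto
          then have "1 - x^2 > 0" by (simp add: power2_eq_square)
          then show ?thesis unfolding mu_def using xp by simp
        qed
        define g' where "g' = (\<lambda>y. 2 * y / (1 - y^2)^2 * W1 y + y^2 / (1 - y^2) * W2 y)"
        have dg: "((\<lambda>y. mu y * W1 y) has_field_derivative g' z) (at z within {t0..x})"
          if z: "z \<in> {t0..x}" for z
        proof -
          have zI: "z \<in> I" using z sub JI by auto
          have z2: "z^2 \<noteq> 1"
          proof -
            have "z^2 \<le> (1/2)^2" using zI by (intro power_mono) (auto simp: I_def)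
            moreover have "(1/2::real)^2 = 1/4" by (simp add: power_divide)
            ultimately show ?thesis by linarith
          qed
          have "((\<lambda>y. y^2 / (1 - y^2) * W1 y) has_field_derivative z^2 / (1 - z^2) * W2 z + 2 * z / (1 - z^2)^2 * W1 z) (at z within I)"
            by (rule DERIV_mult'[OF mu_deriv[OF z2] dW1[OF zI]])
          then have "((\<lambda>y. y^2 / (1 - y^2) * W1 y) has_field_derivative g' z) (at z within I)"
            unfolding g'_def by (simp add: add.commute)
          then show ?thesis unfolding mu_def by (rule DERIV_subset) (use sub JI in auto)
        qed
        have bg: "norm (g' z) \<le> mu x * K * M" if z: "z \<in> {t0..x}" for z
        proof (cases "z = 0")
          case True then show ?thesis using W0 K0 M0 mux by (simp add: g'_def)
        next
          case False
          have zJ: "z \<in> J" using z sub by auto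
          have zp: "z > 0" using z t0 False by auto
          have zx: "z \<le> x" using z by simp
          have z12: "z \<le> 1/2" using zx x12 by simp
          have u0: "1 - z^2 \<ge> 3/4"
          proof -
            have "z^2 \<le> (1/2)^2" using zp z12 by (intro power_mono) auto
            then show ?thesis by (simp add: power2_eq_square)
          qed
          have unz: "1 - z^2 \<noteq> 0" using u0 by simp
          define Z where "Z = 8/3 * z * W1 z + 4/9 * W z + \<sigma> * (R z ^ 7 - Q z ^ 7)"
          have oz: "(z\<^sup>2 - 1) * W2 z + (8/3 * z - 2 / z) * W1 z + 4/9 * W z + \<sigma> * (R z ^ 7 - Q z ^ 7) = 0"
            using odeW[of z] zp z12 by simp
          have P: "z * (z\<^sup>2 - 1) * W2 z + (8/3 * z^2 - 2) * W1 z + z * (4/9 * W z + \<sigma> * (R z ^ 7 - Q z ^ 7)) = 0"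
          proof -
            have "z * ((z\<^sup>2 - 1) * W2 z + (8/3 * z - 2 / z) * W1 z + 4/9 * W z + \<sigma> * (R z ^ 7 - Q z ^ 7))
               = z * (z\<^sup>2 - 1) * W2 z + (8/3 * z^2 - 2) * W1 z + z * (4/9 * W z + \<sigma> * (R z ^ 7 - Q z ^ 7))"
              using zp by (simp add: field_simps power2_eq_square)
            then show ?thesis using oz by simp
          qed
          have G1: "g' z * (1 - z^2)^2 = 2 * z * W1 z + z^2 * (1 - z^2) * W2 z"
            using G1lem[of "1 - z^2" z "W1 z" "W2 z", OF unz] unfolding g'_def by simp
          have G2: "2 * z * W1 z + z^2 * (1 - z^2) * W2 z = z^2 * Z"
            unfolding Z_def using P by algebra
          have gz: "g' z = z^2 / (1 - z^2)^2 * Z"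
          proof -
            have hh: "g' z * (1 - z^2)^2 = z^2 * Z" using G1 G2 by simp
            have U: "(1 - z^2)^2 \<noteq> 0" using unz by simp
            have "g' z = z^2 * Z / (1 - z^2)^2" using hh U by (simp add: eq_divide_eq)
            then show ?thesis by simp
          qed
          have bZ: "\<bar>Z\<bar> \<le> (4/3 + 4/9 + \<bar>\<sigma>\<bar> * L) * M"
          proof -
            have "\<bar>Z\<bar> \<le> \<bar>8/3 * z * W1 z\<bar> + \<bar>4/9 * W z\<bar> + \<bar>\<sigma> * (R z ^ 7 - Q z ^ 7)\<bar>"
              unfolding Z_def by (rule order_trans[OF abs_triangle_ineq add_right_mono[OF abs_triangle_ineq]])
            also have "\<dots> = 8/3 * z * \<bar>W1 z\<bar> + 4/9 * \<bar>W z\<bar> + \<bar>\<sigma>\<bar> * \<bar>R z ^ 7 - Q z ^ 7\<bar>"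
              using zp by (simp add: abs_mult)
            also have "\<dots> \<le> 8/3 * (1/2) * M + 4/9 * M + \<bar>\<sigma>\<bar> * (L * M)"
            proof (intro add_mono mult_mono)
              show "\<bar>W1 z\<bar> \<le> M" "\<bar>W z\<bar> \<le> M" using bW zJ by auto
              have "\<bar>R z ^ 7 - Q z ^ 7\<bar> \<le> L * \<bar>W z\<bar>" using lip zJ JI by auto
              also have "\<dots> \<le> L * M" using L0 bW(1)[OF zJ] by (intro mult_left_mono) auto
              finally show "\<bar>R z ^ 7 - Q z ^ 7\<bar> \<le> L * M" .
            qed (use zp z12 M0 L0 in auto)
            finally show ?thesis by (simp add: algebra_simps)
          qed
          have fz: "z^2 / (1 - z^2)^2 \<le> mu x * (4/3)"
          proof -
            have "z^2 / (1 - z^2)^2 = (z^2 / (1 - z^2)) * (1 / (1 - z^2))" by (simp add: power2_eq_square)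
            also have "\<dots> \<le> mu x * (4/3)"
            proof (rule mult_mono)
              show "z^2 / (1 - z^2) \<le> mu x"
                unfolding mu_def
              proof (rule frac_le)
                show "z^2 \<le> x^2" using zp zx by (intro power_mono) auto
                have "x^2 \<le> (1/2)^2" using xp x12 by (intro power_mono) auto
                then show "0 < 1 - x^2" by (simp add: power2_eq_square)
                show "1 - x^2 \<le> 1 - z^2" using \<open>z^2 \<le> x^2\<close> by simp
              qed simp
              show "1 / (1 - z^2) \<le> 4/3" using u0 by (simp add: divide_le_eq)
            qed (use mux u0 in auto)
            finally show ?thesis .
          qed
          have "norm (g' z) = z^2 / (1 - z^2)^2 * \<bar>Z\<bar>" unfolding gz by (simp add: abs_mult)
          also have "\<dots> \<le> (mu x * (4/3)) * ((4/3 + 4/9 + \<bar>\<sigma>\<bar> * L) * M)"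
            by (rule mult_mono[OF fz bZ]) (use mux in auto)
          also have "\<dots> = mu x * K * M" by (simp add: K_def)
          finally show ?thesis .
        qed
        have "norm (mu x * W1 x - mu t0 * W1 t0) \<le> (mu x * K * M) * norm (x - t0)"
        proof (rule field_differentiable_bound[where S="{t0..x}" and f'=g'])
          fix z assume z: "z \<in> {t0..x}"
          show "((\<lambda>y. mu y * W1 y) has_field_derivative g' z) (at z within {t0..x})" by (rule dg[OF z])
          show "norm (g' z) \<le> mu x * K * M" by (rule bg[OF z])
        qed (use x0 in auto)
        then have "mu x * \<bar>W1 x\<bar> \<le> (mu x * K * M) * (x - t0)" using t0 x0 mux by (simp add: abs_mult)
        also have "\<dots> \<le> (mu x * K * M) * h" using xh mux K0 M0 by (intro mult_left_mono) auto
        finally have "mu x * \<bar>W1 x\<bar> \<le> mu x * (K * M * h)" by (simp add: algebra_simps)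
        then show ?thesis using mux by simp
      qed
      have "v x \<le> h * M + K * M * h" unfolding v_def using e1 e2 by simp
      also have "\<dots> = ((1 + K) * h) * M" by (simp add: algebra_simps)
      finally show ?thesis using hK by simp
    qed
    have "M \<le> M / 2" using est[OF xm(1)] unfolding M_def .
    then have M00: "M = 0" using M0 by simp
    show ?thesis
    proof
      fix x assume "x \<in> {t0..min (t0 + h) (1/2)}"
      then have "x \<in> J" by (simp add: J_def t1_def)
      then have "v x \<le> 0" using est M00 by fastforce
      then have "\<bar>W x\<bar> + \<bar>W1 x\<bar> \<le> 0" by (simp add: v_def)
      moreover have "\<bar>W x\<bar> \<ge> 0" "\<bar>W1 x\<bar> \<ge> 0" by simp_all
      ultimately have "\<bar>W x\<bar> = 0" "\<bar>W1 x\<bar> = 0" by linarith+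
      then show "W x = 0 \<and> W1 x = 0" by simp
    qed
  qed
  have iter: "\<forall>x\<in>{0..min (real k * h) (1/2)}. W x = 0 \<and> W1 x = 0" for k :: nat
  proof (induction k)
    case 0 then show ?case using W0 by simp
  next
    case (Suc k)
    define t0 where "t0 = real k * h"
    have e: "real (Suc k) * h = t0 + h" by (simp add: t0_def distrib_right)
    show ?case
    proof (cases "t0 \<ge> 1/2")
      case True
      then have "min (real (Suc k) * h) (1/2) = 1/2" "min (real k * h) (1/2) = 1/2"
        using h0 unfolding e by (simp_all add: t0_def[symmetric])
      then show ?thesis using Suc by simp
    next
      case False
      have t0p: "0 \<le> t0" "t0 \<le> 1/2" using False h0 by (auto simp: t0_def)
      have "t0 \<in> {0..min (real k * h) (1/2)}" using t0p by (simp add: t0_def)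
      then have z0: "W t0 = 0" "W1 t0 = 0" using Suc by auto
      have st: "\<forall>x\<in>{t0..min (t0 + h) (1/2)}. W x = 0 \<and> W1 x = 0" by (rule step[OF t0p z0])
      show ?thesis
      proof
        fix x assume x: "x \<in> {0..min (real (Suc k) * h) (1/2)}"
        then have x1: "0 \<le> x" "x \<le> t0 + h" "x \<le> 1/2" unfolding e by simp_all
        show "W x = 0 \<and> W1 x = 0"
        proof (cases "x \<le> t0")
          case True
          then have "x \<in> {0..min (real k * h) (1/2)}" using x1 by (simp add: t0_def)
          then show ?thesis using Suc by auto
        next
          case False
          then have "x \<in> {t0..min (t0 + h) (1/2)}" using x1 by simp
          then show ?thesis using st by auto
        qed
      qed
    qed
  qed
  obtain k :: nat where k: "1 / (2 * h) < real k" using reals_Archimedean2 by blast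
  have "real k * h \<ge> 1/2" using k h0 by (simp add: field_simps)
  then have "{0..1/2::real} = {0..min (real k * h) (1/2)}" by simp
  then show ?thesis using iter[of k] by (auto simp: W_def)
qed

theorem lemma2p1:
  fixes \<sigma> :: real
  assumes "\<sigma> = 1 \<or> \<sigma> = -1"
  shows "\<exists>\<epsilon>>0. \<exists>C. \<forall>q0\<in>{0..\<epsilon>}.
           \<exists>Q. ode_sol \<sigma> q0 Q
             \<and> (\<forall>R. ode_sol \<sigma> q0 R \<longrightarrow> (\<forall>a\<in>{0..1/2}. R a = Q a))
             \<and> \<bar>Q (1/2) - q0 * Q0 (1/2)\<bar> \<le> C * q0 ^ 7
             \<and> (\<forall>d. (Q has_real_derivative d) (at (1/2) within {0..1/2}) \<longrightarrow>
                    \<bar>d - q0 * deriv Q0 (1/2)\<bar> \<le> C * q0 ^ 7)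
             \<and> (\<exists>E. smooth_on {-1/2..1/2} E
                    \<and> (\<forall>a\<in>{-1/2..1/2}. E (-a) = E a)
                    \<and> (\<forall>a\<in>{0..1/2}. E a = Q a))"
proof -
  have s: "\<bar>\<sigma>\<bar> \<le> 1" using assms by auto
  have main: "\<exists>Q. ode_sol \<sigma> q0 Q
             \<and> (\<forall>R. ode_sol \<sigma> q0 R \<longrightarrow> (\<forall>a\<in>{0..1/2}. R a = Q a))
             \<and> \<bar>Q (1/2) - q0 * Q0 (1/2)\<bar> \<le> 128 * q0 ^ 7
             \<and> (\<forall>d. (Q has_real_derivative d) (at (1/2) within {0..1/2}) \<longrightarrow>
                    \<bar>d - q0 * deriv Q0 (1/2)\<bar> \<le> 128 * q0 ^ 7)
             \<and> (\<exists>E. smooth_on {-1/2..1/2} E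
                    \<and> (\<forall>a\<in>{-1/2..1/2}. E (-a) = E a)
                    \<and> (\<forall>a\<in>{0..1/2}. E a = Q a))"
    if q0: "q0 \<in> {0..1/4}" for q0
  proof -
    have q: "0 \<le> q0" "q0 \<le> 1/4" using q0 by auto
    have sm1: "smooth_derivs_on {0..1/2} (Qf \<sigma> q0) (Dk \<sigma> q0)"
      by (rule smooth_Q[OF s q]) (auto simp: Rr_def)
    have sm2: "smooth_derivs_on {-1/2..1/2} (Qf \<sigma> q0) (Dk \<sigma> q0)"
      by (rule smooth_Q[OF s q]) (auto simp: Rr_def)
    have ode: "ode_sol \<sigma> q0 (Qf \<sigma> q0)"
      unfolding ode_sol_def
    proof (intro exI[of _ "Dk \<sigma> q0"] conjI ballI)
      show "smooth_derivs_on {0..1/2} (Qf \<sigma> q0) (Dk \<sigma> q0)" by (rule sm1)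
      show "Qf \<sigma> q0 0 = q0" by (rule Qf_0)
      show "Dk \<sigma> q0 1 0 = 0" by (rule Dk1_0)
      fix a :: real assume a: "a \<in> {0<..1/2}"
      show "(a\<^sup>2 - 1) * Dk \<sigma> q0 2 a + (8/3 * a - 2 / a) * Dk \<sigma> q0 1 a + 4/9 * Qf \<sigma> q0 a + \<sigma> * Qf \<sigma> q0 a ^ 7 = 0"
        by (rule ode_at[OF s q]) (use a in \<open>auto simp: Rr_def\<close>)
    qed
    have un: "\<forall>R. ode_sol \<sigma> q0 R \<longrightarrow> (\<forall>a\<in>{0..1/2}. R a = Qf \<sigma> q0 a)"
      using uniq ode by blast
    have dQ: "(Qf \<sigma> q0 has_real_derivative Dk \<sigma> q0 1 (1/2)) (at (1/2) within {0..1/2})"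
      using Dk_deriv[OF s q, of "1/2" 0] by (simp add: Rr_def Dk_0 has_field_derivative_at_within)
    have der: "\<forall>d. (Qf \<sigma> q0 has_real_derivative d) (at (1/2) within {0..1/2}) \<longrightarrow>
                    \<bar>d - q0 * deriv Q0 (1/2)\<bar> \<le> 128 * q0 ^ 7"
    proof (intro allI impI)
      fix d assume hd: "(Qf \<sigma> q0 has_real_derivative d) (at (1/2) within {0..1/2})"
      have "d = Dk \<sigma> q0 1 (1/2)"
        using vector_derivative_unique_within_closed_interval[of 0 "1/2" "1/2" "Qf \<sigma> q0" d "Dk \<sigma> q0 1 (1/2)"] hd dQ
        by (simp add: cbox_interval has_real_derivative_iff_has_vector_derivative)
      then show "\<bar>d - q0 * deriv Q0 (1/2)\<bar> \<le> 128 * q0 ^ 7" using est2[OF s q] by simp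
    qed
    have E: "\<exists>E. smooth_on {-1/2..1/2} E
                    \<and> (\<forall>a\<in>{-1/2..1/2}. E (-a) = E a)
                    \<and> (\<forall>a\<in>{0..1/2}. E a = Qf \<sigma> q0 a)"
    proof (intro exI[of _ "Qf \<sigma> q0"] conjI ballI)
      show "smooth_on {-1/2..1/2} (Qf \<sigma> q0)" unfolding smooth_on_def using sm2 by blast
      fix a :: real
      show "Qf \<sigma> q0 (-a) = Qf \<sigma> q0 a" by (rule Qf_even)
      show "Qf \<sigma> q0 a = Qf \<sigma> q0 a" ..
    qed
    show ?thesis
      by (intro exI[of _ "Qf \<sigma> q0"] conjI ode un est1[OF s q] der E)
  qed
  show ?thesis
    apply (rule exI[of _ "1/4"])
    apply (rule conjI)
     apply simp
    apply (rule exI[of _ 128])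
    apply (rule ballI)
    apply (rule main)
    apply assumption
    done
qed

end
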